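(* Let $x=(x_1,\dots,x_n)$ and let $f\in R(x)$. Then for every $u\in\mathbb{R}^n$ and every sufficiently small $\epsilon>0$ we have \[ lc\big(lc(f)(p^u x)\big) = lc\big(f(p^{\epsilon u}x)\big) \qquad\text{and}\qquad val(f)+ \epsilon \, val\big(lc(f)(p^u x)\big) = val\big(f(p^{\epsilon u} x)\big). \]
   Context: Let $F=F(x)$ be the field consisting of $0$ and all formal series $f=\sum_{t\in T} a_t(x) p^t$, where $T\subset\mathbb{R}$ is discrete and bounded from below, the coefficients $a_t(x)$ are rational functions of $x=(x_1,\dots,x_n)$ independent of $p$, and $a_{\min T}\neq 0$. For nonzero $f$, the valuation is $val(f)=\min T$ and the leading coefficient is $lc(f)=a_{val(f)}$. For $\epsilon\in\mathbb{R}^n$ write $p^{\epsilon}x=(p^{\epsilon_1}x_1,\dots,p^{\epsilon_n}x_n)$. For a rational function $r\in\mathbb{C}(x)$ define $\deg_\epsilon(r)=val(r(p^\epsilon x))$ (expanding $r(p^\epsilon x)$ as a series in $p$) and $\deg(r)=-\inf_{\epsilon\neq 0}\deg_\epsilon(r)/\|\epsilon\|$, with $\|\cdot\|$ the supremum norm. The subfield $R(x)\subset F(x)$ consists of those $f=\sum_{t\in T}a_t p^t$ with $\inf_{t\in T,\,t>val(f)} \deg(a_t)/(t-val(f))<\infty$. For $f\in R(x)$ and $\epsilon$ small enough, $f(p^\epsilon x)$ denotes the series obtained by substituting $p^\epsilon x$ for $x$ in every coefficient $a_t$, expanding in powers of $p$ and summing (this is a well-defined element of $F(x)$ for $\|\epsilon\|$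 small enough). The same conventions apply to $lc(f)$ regarded as an element of $F(x)$. *)

theory Defs
  imports Complex_Main "HOL-Library.Poly_Mapping" "HOL-Computational_Algebra.Fraction_Field"
begin

text \<open>Variables x_i are indexed by a finite type 'n (the linorder is only needed for
  Isabelle's integral-domain instance on polynomials and carries no meaning).\<close>

type_synonym 'n mpoly = "('n \<Rightarrow>\<^sub>0 nat) \<Rightarrow>\<^sub>0 complex"
type_synonym 'n ratfun = "'n mpoly fract"

text \<open>A formal series sum a_t p^t is its coefficient function real => coefficient.
  Elements of F: support is discrete and bounded below (finite below every bound).\<close>

definition is_series :: "(real \<Rightarrow> 'a::zero) \<Rightarrow> bool" where
  "is_series g \<longleftrightarrow> (\<forall>B. finite {t. g t \<noteq> 0 \<and> t \<le> B})"

definition val :: "(real \<Rightarrow> 'a::zero) \<Rightarrow> real" where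
  "val g = (LEAST t. g t \<noteq> 0)"

definition lc :: "(real \<Rightarrow> 'a::zero) \<Rightarrow> 'a" where
  "lc g = g (val g)"

definition ser_mult :: "(real \<Rightarrow> 'a::comm_ring_1) \<Rightarrow> (real \<Rightarrow> 'a) \<Rightarrow> real \<Rightarrow> 'a" where
  "ser_mult a b t = (\<Sum>s\<in>{s. a s \<noteq> 0 \<and> b (t - s) \<noteq> 0}. a s * b (t - s))"

definition edot :: "('n::finite \<Rightarrow> real) \<Rightarrow> ('n \<Rightarrow>\<^sub>0 nat) \<Rightarrow> real" where
  "edot e \<alpha> = (\<Sum>i\<in>UNIV. e i * real (Poly_Mapping.lookup \<alpha> i))"

text \<open>P(p^e x) for a polynomial P, as a series with coefficients in C(x).\<close>
definition psub :: "('n::{finite,linorder} \<Rightarrow> real) \<Rightarrow> 'n mpoly \<Rightarrow> real \<Rightarrow> 'n ratfun" where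
  "psub e P t = Fract (\<Sum>\<alpha>\<in>{\<alpha>\<in>Poly_Mapping.keys P. edot e \<alpha> = t}. Poly_Mapping.single \<alpha> (Poly_Mapping.lookup P \<alpha>)) 1"

text \<open>r(p^e x) for a rational function r = P/Q: the series g with g * Q(p^e x) = P(p^e x).\<close>
definition rsub :: "('n::{finite,linorder} \<Rightarrow> real) \<Rightarrow> 'n ratfun \<Rightarrow> real \<Rightarrow> 'n ratfun" where
  "rsub e r = (THE g. is_series g \<and>
      (\<exists>P Q. Q \<noteq> 0 \<and> r = Fract P Q \<and> ser_mult g (psub e Q) = psub e P))"

definition supnorm :: "('n::finite \<Rightarrow> real) \<Rightarrow> real" where
  "supnorm e = Max (range (\<lambda>i. \<bar>e i\<bar>))"

definition deg_eps :: "('n::{finite,linorder} \<Rightarrow> real) \<Rightarrow> 'n ratfun \<Rightarrow> real" where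
  "deg_eps e r = val (rsub e r)"

definition deg :: "'n::{finite,linorder} ratfun \<Rightarrow> real" where
  "deg r = - (INF e\<in>{e. \<exists>i. e i \<noteq> 0}. deg_eps e r / supnorm e)"

definition in_R :: "(real \<Rightarrow> 'n::{finite,linorder} ratfun) \<Rightarrow> bool" where
  "in_R f \<longleftrightarrow> is_series f \<and>
     (\<exists>C. \<forall>t. f t \<noteq> 0 \<and> t > val f \<longrightarrow> deg (f t) \<le> C * (t - val f))"

text \<open>f(p^e x): substitute in every coefficient, expand, and sum.\<close>
definition fsub :: "('n::{finite,linorder} \<Rightarrow> real) \<Rightarrow> (real \<Rightarrow> 'n ratfun) \<Rightarrow> real \<Rightarrow> 'n ratfun" where
  "fsub e f s = (\<Sum>t\<in>{t. f t \<noteq> 0 \<and> rsub e (f t) (s - t) \<noteq> 0}. rsub e (f t) (s - t))"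

end

theory Submission
  imports Defs
begin


definition supp :: "(real \<Rightarrow> 'a::zero) \<Rightarrow> real set" where
  "supp a = {t. a t \<noteq> 0}"

lemma finite_supp_series: "finite {t. a t \<noteq> 0} \<Longrightarrow> is_series a"
  unfolding is_series_def by (auto intro: finite_subset)

lemma series_val:
  assumes "is_series a" "a s0 \<noteq> 0"
  shows "a (val a) \<noteq> 0" "\<And>s. a s \<noteq> 0 \<Longrightarrow> val a \<le> s"
proof -
  let ?X = "{t. a t \<noteq> 0 \<and> t \<le> s0}"
  have fin: "finite ?X" using assms(1) unfolding is_series_def by blast
  have ne: "s0 \<in> ?X" using assms(2) by auto
  define m where "m = Min ?X"
  have m1: "a m \<noteq> 0" "m \<le> s0" using Min_in[OF fin] ne unfolding m_def by auto
  have m2: "m \<le> s" if "a s \<noteq> 0" for s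
  proof (cases "s \<le> s0")
    case True then show ?thesis using Min_le[OF fin] that unfolding m_def by auto
  next
    case False then show ?thesis using m1 by auto
  qed
  have "val a = m" unfolding val_def by (rule Least_equality) (use m1 m2 in auto)
  then show "a (val a) \<noteq> 0" "\<And>s. a s \<noteq> 0 \<Longrightarrow> val a \<le> s" using m1 m2 by auto
qed

lemma series_below_val: "is_series a \<Longrightarrow> a s0 \<noteq> 0 \<Longrightarrow> s < val a \<Longrightarrow> a s = 0"
  by (metis not_le series_val(2))

lemma val_eqI: "a m \<noteq> 0 \<Longrightarrow> (\<And>s. a s \<noteq> 0 \<Longrightarrow> m \<le> s) \<Longrightarrow> val a = m"
  unfolding val_def by (rule Least_equality) auto

lemma ser_mult_superset:
  assumes "finite F" "{s. a s \<noteq> 0 \<and> b (t - s) \<noteq> 0} \<subseteq> F"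
  shows "ser_mult a b t = (\<Sum>s\<in>F. a s * b (t - s))"
  unfolding ser_mult_def
  by (rule sum.mono_neutral_left) (use assms in auto)

lemma ser_mult_comm: "ser_mult a b t = ser_mult b (a :: real \<Rightarrow> 'a::comm_ring_1) t"
  unfolding ser_mult_def
  by (rule sum.reindex_bij_witness[of _ "\<lambda>s. t - s" "\<lambda>s. t - s"]) (auto simp: mult.commute)

lemma ser_mult_comm': "ser_mult a b = ser_mult b (a :: real \<Rightarrow> 'a::comm_ring_1)"
  using ser_mult_comm by blast

lemma fin_rel:
  assumes "is_series a" "is_series b"
  shows "finite {s. a s \<noteq> 0 \<and> b (t - s) \<noteq> 0}"
proof (cases "\<exists>s. b s \<noteq> 0")
  case False then show ?thesis by simp
next
  case True
  then obtain s0 where "b s0 \<noteq> 0" by auto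
  have "{s. a s \<noteq> 0 \<and> b (t - s) \<noteq> 0} \<subseteq> {s. a s \<noteq> 0 \<and> s \<le> t - val b}"
  proof
    fix s assume "s \<in> {s. a s \<noteq> 0 \<and> b (t - s) \<noteq> 0}"
    then have "a s \<noteq> 0" "b (t - s) \<noteq> 0" by auto
    with series_val(2)[OF assms(2) \<open>b s0 \<noteq> 0\<close>, of "t - s"] show "s \<in> {s. a s \<noteq> 0 \<and> s \<le> t - val b}" by auto
  qed
  moreover have "finite {s. a s \<noteq> 0 \<and> s \<le> t - val b}" using assms(1) unfolding is_series_def by blast
  ultimately show ?thesis by (rule finite_subset)
qed

lemma ser_mult_series:
  assumes "is_series a" "is_series (b :: real \<Rightarrow> 'a::comm_ring_1)"
  shows "is_series (ser_mult a b)"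
proof (cases "(\<exists>s. a s \<noteq> 0) \<and> (\<exists>s. b s \<noteq> 0)")
  case False
  then have "ser_mult a b = (\<lambda>t. 0)" unfolding ser_mult_def by (auto intro!: ext)
  then show ?thesis unfolding is_series_def by simp
next
  case True
  then obtain sa sb where sa: "a sa \<noteq> 0" and sb: "b sb \<noteq> 0" by auto
  show ?thesis unfolding is_series_def
  proof
    fix B
    let ?A = "{r. a r \<noteq> 0 \<and> r \<le> B - val b}" and ?C = "{q. b q \<noteq> 0 \<and> q \<le> B - val a}"
    have fA: "finite ?A" "finite ?C" using assms unfolding is_series_def by blast+
    have "{t. ser_mult a b t \<noteq> 0 \<and> t \<le> B} \<subseteq> (\<lambda>(r,q). r + q) ` (?A \<times> ?C)"
    proof
      fix t assume t: "t \<in> {t. ser_mult a b t \<noteq> 0 \<and> t \<le> B}"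
      then obtain r where r: "a r \<noteq> 0" "b (t - r) \<noteq> 0"
        unfolding ser_mult_def by (auto elim!: sum.not_neutral_contains_not_neutral)
      have "val a \<le> r" "val b \<le> t - r"
        using series_val(2)[OF assms(1) sa] series_val(2)[OF assms(2) sb] r by auto
      then have "(r, t - r) \<in> ?A \<times> ?C" using r t by auto
      then show "t \<in> (\<lambda>(r,q). r + q) ` (?A \<times> ?C)" by (rule rev_image_eqI) simp
    qed
    then show "finite {t. ser_mult a b t \<noteq> 0 \<and> t \<le> B}"
      using fA by (rule finite_subset[OF _ finite_imageI[OF finite_cartesian_product]])
  qed
qed

lemma ser_mult_at_val:
  assumes "is_series a" "is_series b" "a sa \<noteq> 0" "b sb \<noteq> 0"
  shows "ser_mult a b (val a + val b) = a (val a) * (b (val b) :: 'a::comm_ring_1)"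
proof -
  have "{s. a s \<noteq> 0 \<and> b (val a + val b - s) \<noteq> 0} \<subseteq> {val a}"
  proof
    fix s assume "s \<in> {s. a s \<noteq> 0 \<and> b (val a + val b - s) \<noteq> 0}"
    then have "a s \<noteq> 0" "b (val a + val b - s) \<noteq> 0" by auto
    with series_val(2)[OF assms(1,3), of s] series_val(2)[OF assms(2,4), of "val a + val b - s"]
    show "s \<in> {val a}" by auto
  qed
  then have "ser_mult a b (val a + val b) = (\<Sum>s\<in>{val a}. a s * b (val a + val b - s))"
    by (intro ser_mult_superset) auto
  then show ?thesis by simp
qed

lemma ser_mult_nonzero:
  assumes "is_series a" "is_series b" "a sa \<noteq> 0" "b sb \<noteq> 0"
  shows "ser_mult a b (val a + val b) \<noteq> (0 :: 'a::idom)"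
  using ser_mult_at_val[OF assms] series_val(1)[OF assms(1,3)] series_val(1)[OF assms(2,4)] by simp



definition mono0 :: "real \<Rightarrow> 'a \<Rightarrow> real \<Rightarrow> 'a::zero" where
  "mono0 t0 c t = (if t = t0 then c else 0)"

lemma ser_mult_one_right: "ser_mult a (mono0 0 1) = (a :: real \<Rightarrow> 'a::comm_ring_1)"
proof
  fix t
  have "ser_mult a (mono0 0 1) t = (\<Sum>s\<in>{t}. a s * mono0 0 1 (t - s))"
    by (rule ser_mult_superset) (auto simp: mono0_def)
  then show "ser_mult a (mono0 0 1) t = a t" by (simp add: mono0_def)
qed

lemma ser_mult_cong:
  assumes "\<And>s. b (t - s) \<noteq> 0 \<Longrightarrow> a s = a' s"
  shows "ser_mult a b t = ser_mult a' b t"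
proof -
  have "{s. a s \<noteq> 0 \<and> b (t - s) \<noteq> 0} = {s. a' s \<noteq> 0 \<and> b (t - s) \<noteq> 0}" using assms by auto
  then show ?thesis unfolding ser_mult_def using assms by (auto intro!: sum.cong)
qed

lemma ser_mult_sum_left:
  fixes a :: "nat \<Rightarrow> real \<Rightarrow> 'a::comm_ring_1"
  assumes "finite K" "\<And>k. k \<in> K \<Longrightarrow> finite {s. a k s \<noteq> 0 \<and> c (t - s) \<noteq> 0}"
  shows "ser_mult (\<lambda>s. \<Sum>k\<in>K. a k s) c t = (\<Sum>k\<in>K. ser_mult (a k) c t)"
proof -
  let ?F = "\<Union>k\<in>K. {s. a k s \<noteq> 0 \<and> c (t - s) \<noteq> 0}"
  have fF: "finite ?F" using assms by auto
  have "ser_mult (\<lambda>s. \<Sum>k\<in>K. a k s) c t = (\<Sum>s\<in>?F. (\<Sum>k\<in>K. a k s) * c (t - s))"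
  proof (rule ser_mult_superset[OF fF])
    show "{s. (\<Sum>k\<in>K. a k s) \<noteq> 0 \<and> c (t - s) \<noteq> 0} \<subseteq> ?F"
      by (auto elim!: sum.not_neutral_contains_not_neutral)
  qed
  also have "\<dots> = (\<Sum>k\<in>K. \<Sum>s\<in>?F. a k s * c (t - s))"
    by (simp add: sum_distrib_right sum.swap[of _ K])
  also have "\<dots> = (\<Sum>k\<in>K. ser_mult (a k) c t)"
  proof (rule sum.cong[OF refl])
    fix k assume "k \<in> K"
    show "(\<Sum>s\<in>?F. a k s * c (t - s)) = ser_mult (a k) c t"
      by (rule ser_mult_superset[symmetric, OF fF]) (use \<open>k \<in> K\<close> in auto)
  qed
  finally show ?thesis .
qed

lemma ser_mult_diff_left:
  fixes a b :: "real \<Rightarrow> 'a::comm_ring_1"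
  assumes "finite {s. a s \<noteq> 0 \<and> c (t - s) \<noteq> 0}" "finite {s. b s \<noteq> 0 \<and> c (t - s) \<noteq> 0}"
  shows "ser_mult (\<lambda>s. a s - b s) c t = ser_mult a c t - ser_mult b c t"
proof -
  let ?F = "{s. a s \<noteq> 0 \<and> c (t - s) \<noteq> 0} \<union> {s. b s \<noteq> 0 \<and> c (t - s) \<noteq> 0}"
  have fF: "finite ?F" using assms by auto
  have "ser_mult (\<lambda>s. a s - b s) c t = (\<Sum>s\<in>?F. (a s - b s) * c (t - s))"
    by (rule ser_mult_superset[OF fF]) auto
  also have "\<dots> = (\<Sum>s\<in>?F. a s * c (t - s)) - (\<Sum>s\<in>?F. b s * c (t - s))"
    by (simp add: algebra_simps sum_subtractf)
  also have "(\<Sum>s\<in>?F. a s * c (t - s)) = ser_mult a c t"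
    by (rule ser_mult_superset[symmetric, OF fF]) auto
  also have "(\<Sum>s\<in>?F. b s * c (t - s)) = ser_mult b c t"
    by (rule ser_mult_superset[symmetric, OF fF]) auto
  finally show ?thesis .
qed

lemma ser_mult_add_left:
  fixes a b :: "real \<Rightarrow> 'a::comm_ring_1"
  assumes "finite {s. a s \<noteq> 0 \<and> c (t - s) \<noteq> 0}" "finite {s. b s \<noteq> 0 \<and> c (t - s) \<noteq> 0}"
  shows "ser_mult (\<lambda>s. a s + b s) c t = ser_mult a c t + ser_mult b c t"
proof -
  let ?F = "{s. a s \<noteq> 0 \<and> c (t - s) \<noteq> 0} \<union> {s. b s \<noteq> 0 \<and> c (t - s) \<noteq> 0}"
  have fF: "finite ?F" using assms by auto
  have "ser_mult (\<lambda>s. a s + b s) c t = (\<Sum>s\<in>?F. (a s + b s) * c (t - s))"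
    by (rule ser_mult_superset[OF fF]) auto
  also have "\<dots> = (\<Sum>s\<in>?F. a s * c (t - s)) + (\<Sum>s\<in>?F. b s * c (t - s))"
    by (simp add: algebra_simps sum.distrib)
  also have "(\<Sum>s\<in>?F. a s * c (t - s)) = ser_mult a c t"
    by (rule ser_mult_superset[symmetric, OF fF]) auto
  also have "(\<Sum>s\<in>?F. b s * c (t - s)) = ser_mult b c t"
    by (rule ser_mult_superset[symmetric, OF fF]) auto
  finally show ?thesis .
qed

lemma ser_mult_uminus_right:
  "ser_mult a (\<lambda>s. - b s) t = - ser_mult a (b :: real \<Rightarrow> 'a::comm_ring_1) t"
  unfolding ser_mult_def by (simp add: sum_negf)

lemma ser_mult_assoc:
  fixes a b c :: "real \<Rightarrow> 'a::comm_ring_1"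
  assumes sa: "is_series a" and sb: "is_series b" and sc: "is_series c"
  shows "ser_mult (ser_mult a b) c t = ser_mult a (ser_mult b c) t"
proof (cases "(\<exists>s. a s \<noteq> 0) \<and> (\<exists>s. b s \<noteq> 0) \<and> (\<exists>s. c s \<noteq> 0)")
  case False
  then consider "a = (\<lambda>_. 0)" | "b = (\<lambda>_. 0)" | "c = (\<lambda>_. 0)" by auto
  then show ?thesis by cases (simp_all add: ser_mult_def)
next
  case True
  then obtain a0 b0 c0 where a0: "a a0 \<noteq> 0" and b0: "b b0 \<noteq> 0" and c0: "c c0 \<noteq> 0" by auto
  note va = series_val(2)[OF sa a0] and vb = series_val(2)[OF sb b0] and vc = series_val(2)[OF sc c0]
  define T where "T = {(r, q). a r \<noteq> 0 \<and> b q \<noteq> 0 \<and> c (t - r - q) \<noteq> 0}"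
  have T_sub: "T \<subseteq> {r. a r \<noteq> 0 \<and> r \<le> t - val b - val c} \<times> {q. b q \<noteq> 0 \<and> q \<le> t - val a - val c}"
  proof
    fix x assume "x \<in> T"
    then obtain r q where x: "x = (r, q)" "a r \<noteq> 0" "b q \<noteq> 0" "c (t - r - q) \<noteq> 0" unfolding T_def by auto
    have "val a \<le> r" "val b \<le> q" "val c \<le> t - r - q" using va vb vc x by auto
    then show "x \<in> {r. a r \<noteq> 0 \<and> r \<le> t - val b - val c} \<times> {q. b q \<noteq> 0 \<and> q \<le> t - val a - val c}"
      using x by auto
  qed
  have finT: "finite T"
    by (rule finite_subset[OF T_sub]) (use sa sb in \<open>auto simp: is_series_def\<close>)
  define f where "f = (\<lambda>(r, q). a r * b q * c (t - r - q))"
  define R where "R = fst ` T"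
  define Q where "Q r = {q. b q \<noteq> 0 \<and> c (t - r - q) \<noteq> 0}" for r
  have finR: "finite R" unfolding R_def using finT by auto
  have finQ: "finite (Q r)" for r
    unfolding Q_def using fin_rel[OF sb sc, of "t - r"] by (simp add: diff_diff_eq)
  have "ser_mult a (ser_mult b c) t = (\<Sum>r\<in>R. a r * ser_mult b c (t - r))"
  proof (rule ser_mult_superset[OF finR])
    show "{s. a s \<noteq> 0 \<and> ser_mult b c (t - s) \<noteq> 0} \<subseteq> R"
    proof
      fix r assume "r \<in> {s. a s \<noteq> 0 \<and> ser_mult b c (t - s) \<noteq> 0}"
      then have r: "a r \<noteq> 0" "ser_mult b c (t - r) \<noteq> 0" by auto
      then obtain q where "b q \<noteq> 0" "c (t - r - q) \<noteq> 0"
        unfolding ser_mult_def by (auto elim!: sum.not_neutral_contains_not_neutral)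
      then have "(r, q) \<in> T" using r unfolding T_def by auto
      then show "r \<in> R" unfolding R_def by force
    qed
  qed
  also have "\<dots> = (\<Sum>r\<in>R. \<Sum>q\<in>Q r. f (r, q))"
  proof (rule sum.cong[OF refl])
    fix r assume "r \<in> R"
    have "ser_mult b c (t - r) = (\<Sum>q\<in>Q r. b q * c (t - r - q))"
      by (rule ser_mult_superset[OF finQ]) (auto simp: Q_def)
    then show "a r * ser_mult b c (t - r) = (\<Sum>q\<in>Q r. f (r, q))"
      by (simp add: f_def sum_distrib_left mult.assoc)
  qed
  also have "\<dots> = (\<Sum>x\<in>Sigma R Q. f x)"
    using sum.Sigma[OF finR, of Q "\<lambda>r q. f (r, q)"] finQ by simp
  also have "Sigma R Q = T" unfolding R_def Q_def T_def by force
  finally have rhs: "ser_mult a (ser_mult b c) t = (\<Sum>x\<in>T. f x)" .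
  define S where "S = (\<lambda>(r, q). r + q) ` T"
  define P where "P s = {r. a r \<noteq> 0 \<and> b (s - r) \<noteq> 0}" for s
  have finS: "finite S" unfolding S_def using finT by auto
  have finP: "finite (P s)" for s unfolding P_def using fin_rel[OF sa sb] .
  have "ser_mult (ser_mult a b) c t = (\<Sum>s\<in>S. ser_mult a b s * c (t - s))"
  proof (rule ser_mult_superset[OF finS])
    show "{s. ser_mult a b s \<noteq> 0 \<and> c (t - s) \<noteq> 0} \<subseteq> S"
    proof
      fix s assume "s \<in> {s. ser_mult a b s \<noteq> 0 \<and> c (t - s) \<noteq> 0}"
      then have s: "ser_mult a b s \<noteq> 0" "c (t - s) \<noteq> 0" by auto
      then obtain r where r: "a r \<noteq> 0" "b (s - r) \<noteq> 0"
        unfolding ser_mult_def by (auto elim!: sum.not_neutral_contains_not_neutral)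
      then have "(r, s - r) \<in> T" using s unfolding T_def by auto
      then show "s \<in> S" unfolding S_def by (rule rev_image_eqI) simp
    qed
  qed
  also have "\<dots> = (\<Sum>s\<in>S. \<Sum>r\<in>P s. a r * b (s - r) * c (t - s))"
  proof (rule sum.cong[OF refl])
    fix s assume "s \<in> S"
    have "ser_mult a b s = (\<Sum>r\<in>P s. a r * b (s - r))"
      by (rule ser_mult_superset[OF finP]) (auto simp: P_def)
    then show "ser_mult a b s * c (t - s) = (\<Sum>r\<in>P s. a r * b (s - r) * c (t - s))"
      by (simp add: sum_distrib_right)
  qed
  also have "\<dots> = (\<Sum>y\<in>Sigma S P. a (snd y) * b (fst y - snd y) * c (t - fst y))"
    by (subst sum.Sigma[OF finS]) (use finP in \<open>auto simp: split_beta\<close>)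
  also have "\<dots> = (\<Sum>x\<in>T. f x)"
  proof (rule sum.reindex_bij_witness_not_neutral[of "{}" "{}" _ "\<lambda>(r, q). (r + q, r)" "\<lambda>(s, r). (r, s - r)"])
    show "finite {}" by simp
    show "finite {}" by simp
  qed (auto simp: S_def P_def T_def f_def diff_diff_eq)
  finally show ?thesis using rhs by simp
qed



lemma ser_mult_fin_supp:
  fixes a b :: "real \<Rightarrow> 'a::comm_ring_1"
  assumes "finite {t. a t \<noteq> 0}" "finite {t. b t \<noteq> 0}"
  shows "finite {t. ser_mult a b t \<noteq> 0}"
proof -
  have "{t. ser_mult a b t \<noteq> 0} \<subseteq> (\<lambda>(r,q). r + q) ` ({t. a t \<noteq> 0} \<times> {t. b t \<noteq> 0})"
  proof
    fix t assume "t \<in> {t. ser_mult a b t \<noteq> 0}"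
    then obtain r where r: "a r \<noteq> 0" "b (t - r) \<noteq> 0"
      unfolding ser_mult_def by (auto elim!: sum.not_neutral_contains_not_neutral)
    then have "(r, t - r) \<in> {t. a t \<noteq> 0} \<times> {t. b t \<noteq> 0}" by auto
    then show "t \<in> (\<lambda>(r,q). r + q) ` ({t. a t \<noteq> 0} \<times> {t. b t \<noteq> 0})" by (rule rev_image_eqI) simp
  qed
  then show ?thesis using assms by (rule finite_subset[OF _ finite_imageI[OF finite_cartesian_product]])
qed

locale inv_setup =
  fixes B :: "real \<Rightarrow> 'a::field" and d :: real
  assumes finB: "finite {t. B t \<noteq> 0}" and B0: "B 0 = 1" and Bpos: "\<And>t. B t \<noteq> 0 \<Longrightarrow> 0 \<le> t"
    and dpos: "0 < d" and dle: "\<And>t. B t \<noteq> 0 \<Longrightarrow> t \<noteq> 0 \<Longrightarrow> d \<le> t"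
begin

definition N where "N t = (if t = 0 then 0 else B t)"

primrec pw :: "nat \<Rightarrow> real \<Rightarrow> 'a" where
  "pw 0 = mono0 0 1"
| "pw (Suc k) = ser_mult (pw k) (\<lambda>t. - N t)"

lemma finN: "finite {t. N t \<noteq> 0}"
  by (rule finite_subset[OF _ finB]) (auto simp: N_def)

lemma pw_fin: "finite {t. pw k t \<noteq> 0}"
proof (induction k)
  case 0 then show ?case by (rule finite_subset[of _ "{0}"]) (auto simp: mono0_def)
next
  case (Suc k)
  have "finite {t. - N t \<noteq> 0}" using finN by simp
  then show ?case using ser_mult_fin_supp[OF Suc] by simp
qed

lemma pw_low: "pw k t \<noteq> 0 \<Longrightarrow> real k * d \<le> t"
proof (induction k arbitrary: t)
  case 0 then show ?case by (auto simp: mono0_def split: if_splits)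
next
  case (Suc k)
  then obtain s where s: "pw k s \<noteq> 0" "- N (t - s) \<noteq> 0"
    by (auto simp: ser_mult_def elim!: sum.not_neutral_contains_not_neutral)
  have "real k * d \<le> s" using Suc.IH s(1) .
  moreover have "d \<le> t - s" using s(2) dle by (auto simp: N_def split: if_splits)
  ultimately show ?case by (simp add: algebra_simps)
qed

lemma pw_zero: "t < real k * d \<Longrightarrow> pw k t = 0"
  using pw_low[of k t] by linarith

definition h where "h t = (\<Sum>k\<le>nat \<lceil>t / d\<rceil>. pw k t)"

lemma h_eq:
  assumes "nat \<lceil>t / d\<rceil> \<le> K"
  shows "h t = (\<Sum>k\<le>K. pw k t)"
  unfolding h_def
proof (rule sum.mono_neutral_left)
  show "\<forall>i\<in>{..K} - {..nat \<lceil>t / d\<rceil>}. pw i t = 0"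
  proof
    fix i assume "i \<in> {..K} - {..nat \<lceil>t / d\<rceil>}"
    then have "nat \<lceil>t / d\<rceil> < i" by auto
    then have "t / d < real i" by linarith
    then have "t < real i * d" using dpos by (simp add: field_simps)
    then show "pw i t = 0" by (rule pw_zero)
  qed
qed (use assms in auto)

lemma h_series: "is_series h"
  unfolding is_series_def
proof
  fix Bd
  let ?K = "nat \<lceil>Bd / d\<rceil>"
  have "{t. h t \<noteq> 0 \<and> t \<le> Bd} \<subseteq> (\<Union>k\<le>?K. {t. pw k t \<noteq> 0})"
  proof
    fix t assume t: "t \<in> {t. h t \<noteq> 0 \<and> t \<le> Bd}"
    have "t / d \<le> Bd / d" using t dpos by (simp add: divide_right_mono)
    then have "nat \<lceil>t / d\<rceil> \<le> ?K" by (intro nat_mono ceiling_mono)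
    then have "h t = (\<Sum>k\<le>?K. pw k t)" by (rule h_eq)
    with t obtain k where "k \<le> ?K" "pw k t \<noteq> 0"
      by (auto elim!: sum.not_neutral_contains_not_neutral)
    then show "t \<in> (\<Union>k\<le>?K. {t. pw k t \<noteq> 0})" by auto
  qed
  then show "finite {t. h t \<noteq> 0 \<and> t \<le> Bd}"
    by (rule finite_subset) (use pw_fin in blast)
qed

lemma h_inv: "ser_mult h B t = mono0 0 1 t"
proof -
  define K where "K = nat \<lceil>t / d\<rceil>"
  have "ser_mult h B t = ser_mult (\<lambda>s. \<Sum>k\<le>K. pw k s) B t"
  proof (rule ser_mult_cong)
    fix s assume "B (t - s) \<noteq> 0"
    then have "s \<le> t" using Bpos[of "t - s"] by linarith
    then have "s / d \<le> t / d" using dpos by (simp add: divide_right_mono)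
    then have "nat \<lceil>s / d\<rceil> \<le> K" unfolding K_def by (intro nat_mono ceiling_mono)
    then show "h s = (\<Sum>k\<le>K. pw k s)" by (rule h_eq)
  qed
  also have "\<dots> = (\<Sum>k\<le>K. ser_mult (pw k) B t)"
  proof (rule ser_mult_sum_left)
    fix k show "finite {s. pw k s \<noteq> 0 \<and> B (t - s) \<noteq> 0}"
      by (rule finite_subset[OF _ pw_fin[of k]]) blast
  qed simp
  also have "\<dots> = (\<Sum>k\<le>K. pw k t - pw (Suc k) t)"
  proof (rule sum.cong[OF refl])
    fix k
    have Beq: "(\<lambda>s. mono0 0 1 s + N s) = B" by (rule ext) (simp add: N_def mono0_def B0)
    have e1: "ser_mult (pw k) B t = ser_mult B (pw k) t" by (rule ser_mult_comm)
    have e2': "ser_mult (\<lambda>s. mono0 0 1 s + N s) (pw k) t = ser_mult (mono0 0 1) (pw k) t + ser_mult N (pw k) t"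
    proof (rule ser_mult_add_left)
      show "finite {s. mono0 0 1 s \<noteq> 0 \<and> pw k (t - s) \<noteq> 0}"
        by (rule finite_subset[of _ "{0}"]) (auto simp: mono0_def split: if_splits)
      show "finite {s. N s \<noteq> 0 \<and> pw k (t - s) \<noteq> 0}"
        by (rule finite_subset[OF _ finN]) blast
    qed
    have e2: "ser_mult B (pw k) t = ser_mult (mono0 0 1) (pw k) t + ser_mult N (pw k) t"
      using e2' by (simp only: Beq)
    have e3: "ser_mult (mono0 0 1) (pw k) t = pw k t"
      using ser_mult_one_right[of "pw k"] ser_mult_comm[of "mono0 0 1" "pw k" t] by simp
    have e4: "ser_mult N (pw k) t = - pw (Suc k) t"
      using ser_mult_uminus_right[of "pw k" N t] ser_mult_comm[of N "pw k" t] by simp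
    show "ser_mult (pw k) B t = pw k t - pw (Suc k) t" using e1 e2 e3 e4 by simp
  qed
  also have "\<dots> = pw 0 t - pw (Suc K) t" by (rule sum_telescope)
  also have "pw (Suc K) t = 0"
  proof (rule pw_zero)
    have "t / d \<le> real K" unfolding K_def by (rule real_nat_ceiling_ge)
    then have "t \<le> real K * d" using dpos by (simp add: field_simps)
    then show "t < real (Suc K) * d" using dpos by (simp add: distrib_right)
  qed
  finally show ?thesis by simp
qed

end

lemma inverse_exists:
  fixes A :: "real \<Rightarrow> 'a::field"
  assumes finA: "finite {t. A t \<noteq> 0}" and nz: "A s0 \<noteq> 0"
  shows "\<exists>h. is_series h \<and> ser_mult h A = mono0 0 1"
proof -
  have sA: "is_series A" using finA by (rule finite_supp_series)
  define t0 where "t0 = val A"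
  define a0 where "a0 = A t0"
  have a0: "a0 \<noteq> 0" unfolding a0_def t0_def using series_val(1)[OF sA nz] .
  have lowA: "A t \<noteq> 0 \<Longrightarrow> t0 \<le> t" for t unfolding t0_def using series_val(2)[OF sA nz] .
  define B where "B t = A (t + t0) * inverse a0" for t
  have finB: "finite {t. B t \<noteq> 0}"
  proof -
    have "{t. B t \<noteq> 0} \<subseteq> (\<lambda>t. t - t0) ` {t. A t \<noteq> 0}"
    proof
      fix t assume "t \<in> {t. B t \<noteq> 0}"
      then have "A (t + t0) \<noteq> 0" unfolding B_def by auto
      then show "t \<in> (\<lambda>t. t - t0) ` {t. A t \<noteq> 0}" by (intro rev_image_eqI[of "t + t0"]) auto
    qed
    then show ?thesis using finA by (rule finite_subset[OF _ finite_imageI])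
  qed
  define D where "D = {t. B t \<noteq> 0 \<and> t \<noteq> 0}"
  have finD: "finite D" unfolding D_def using finB by (rule finite_subset[rotated]) auto
  define d where "d = (if D = {} then 1 else Min D)"
  have Bpos: "B t \<noteq> 0 \<Longrightarrow> 0 \<le> t" for t using lowA[of "t + t0"] unfolding B_def by auto
  have dpos: "0 < d"
  proof (cases "D = {}")
    case False
    then have "Min D \<in> D" using finD by auto
    then have "0 \<le> Min D" "Min D \<noteq> 0" using Bpos unfolding D_def by auto
    then show ?thesis using False unfolding d_def by auto
  qed (simp add: d_def)
  have dle: "B t \<noteq> 0 \<Longrightarrow> t \<noteq> 0 \<Longrightarrow> d \<le> t" for t
  proof -
    assume "B t \<noteq> 0" "t \<noteq> 0"
    then have "t \<in> D" unfolding D_def by auto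
    then show "d \<le> t" unfolding d_def using finD by auto
  qed
  have B0: "B 0 = 1" unfolding B_def a0_def using a0 by (simp add: a0_def)
  interpret inv_setup B d using finB B0 Bpos dpos dle by unfold_locales auto
  define hA where "hA s = h (s + t0) * inverse a0" for s
  have "is_series hA" unfolding is_series_def
  proof
    fix Bd
    have "{s. hA s \<noteq> 0 \<and> s \<le> Bd} \<subseteq> (\<lambda>s. s - t0) ` {t. h t \<noteq> 0 \<and> t \<le> Bd + t0}"
    proof
      fix s assume "s \<in> {s. hA s \<noteq> 0 \<and> s \<le> Bd}"
      then have "h (s + t0) \<noteq> 0" "s + t0 \<le> Bd + t0" unfolding hA_def by auto
      then show "s \<in> (\<lambda>s. s - t0) ` {t. h t \<noteq> 0 \<and> t \<le> Bd + t0}"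
        by (intro rev_image_eqI[of "s + t0"]) auto
    qed
    moreover have "finite {t. h t \<noteq> 0 \<and> t \<le> Bd + t0}" using h_series unfolding is_series_def by blast
    ultimately show "finite {s. hA s \<noteq> 0 \<and> s \<le> Bd}" by (rule finite_subset[OF _ finite_imageI])
  qed
  moreover have "ser_mult hA A = mono0 0 1"
  proof
    fix t
    have "ser_mult hA A t = ser_mult h B t"
      unfolding ser_mult_def
    proof (rule sum.reindex_bij_witness[of _ "\<lambda>s. s - t0" "\<lambda>s. s + t0"])
      fix s assume s: "s \<in> {s. hA s \<noteq> 0 \<and> A (t - s) \<noteq> 0}"
      have eq: "t - (s + t0) + t0 = t - s" by simp
      show "s + t0 - t0 = s" by simp
      show "s + t0 \<in> {s. h s \<noteq> 0 \<and> B (t - s) \<noteq> 0}"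
        using s a0 unfolding hA_def B_def eq by simp
      show "h (s + t0) * B (t - (s + t0)) = hA s * A (t - s)"
        unfolding hA_def B_def eq by simp
    next
      fix s assume s: "s \<in> {s. h s \<noteq> 0 \<and> B (t - s) \<noteq> 0}"
      have eq: "t - (s - t0) = t - s + t0" by simp
      show "s - t0 + t0 = s" by simp
      have "A (t - s + t0) \<noteq> 0" using s unfolding B_def by simp
      then have "A (t - (s - t0)) \<noteq> 0" unfolding eq .
      then show "s - t0 \<in> {s. hA s \<noteq> 0 \<and> A (t - s) \<noteq> 0}"
        using s a0 unfolding hA_def by simp
    qed
    then show "ser_mult hA A t = mono0 0 1 t" using h_inv by simp
  qed
  ultimately show ?thesis by blast
qed



lemma Fract1_eq0: "Fract (x :: 'a::idom) 1 = 0 \<longleftrightarrow> x = 0"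
  by (simp add: Zero_fract_def eq_fract)

lemma Fract1_mult: "Fract (x :: 'a::idom) 1 * Fract y 1 = Fract (x * y) 1"
  by simp

lemma Fract1_add: "Fract (x :: 'a::idom) 1 + Fract y 1 = Fract (x + y) 1"
  by simp

lemma Fract1_sum: "(\<Sum>i\<in>I. Fract (f i :: 'a::idom) 1) = Fract (\<Sum>i\<in>I. f i) 1"
proof (induction I rule: infinite_finite_induct)
  case (infinite A) then show ?case by (simp add: Zero_fract_def)
next
  case empty then show ?case by (simp add: Zero_fract_def)
next
  case (insert x F) then show ?case by (simp add: Fract1_add)
qed

definition gcomp :: "('n::finite \<Rightarrow> real) \<Rightarrow> 'n mpoly \<Rightarrow> real \<Rightarrow> 'n mpoly" where
  "gcomp e P t = (\<Sum>\<alpha>\<in>{\<alpha>\<in>Poly_Mapping.keys P. edot e \<alpha> = t}. Poly_Mapping.single \<alpha> (Poly_Mapping.lookup P \<alpha>))"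

lemma psub_comp: "psub e P t = Fract (gcomp e P t) 1"
  unfolding psub_def gcomp_def ..

lemma lookup_comp: "Poly_Mapping.lookup (gcomp e P t) \<beta> = (if edot e \<beta> = t then Poly_Mapping.lookup P \<beta> else 0)"
proof -
  have "Poly_Mapping.lookup (gcomp e P t) \<beta> =
        (\<Sum>\<alpha>\<in>{\<alpha>\<in>Poly_Mapping.keys P. edot e \<alpha> = t}. (if \<alpha> = \<beta> then Poly_Mapping.lookup P \<alpha> else 0))"
    unfolding gcomp_def lookup_sum by (intro sum.cong) (auto simp: lookup_single)
  also have "\<dots> = (if \<beta> \<in> {\<alpha>\<in>Poly_Mapping.keys P. edot e \<alpha> = t} then Poly_Mapping.lookup P \<beta> else 0)"
    by (rule sum.delta) simp
  also have "\<dots> = (if edot e \<beta> = t then Poly_Mapping.lookup P \<beta> else 0)"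
    by (auto simp: in_keys_iff)
  finally show ?thesis .
qed

lemma comp_eq0: "gcomp e P t = 0 \<longleftrightarrow> (\<forall>\<alpha>\<in>Poly_Mapping.keys P. edot e \<alpha> \<noteq> t)"
proof
  assume "gcomp e P t = 0"
  then show "\<forall>\<alpha>\<in>Poly_Mapping.keys P. edot e \<alpha> \<noteq> t"
    by (metis in_keys_iff lookup_comp lookup_zero)
next
  assume "\<forall>\<alpha>\<in>Poly_Mapping.keys P. edot e \<alpha> \<noteq> t"
  then show "gcomp e P t = 0"
    by (intro poly_mapping_eqI) (auto simp: lookup_comp in_keys_iff)
qed

lemma psub_nz: "psub e P t \<noteq> 0 \<longleftrightarrow> (\<exists>\<alpha>\<in>Poly_Mapping.keys P. edot e \<alpha> = t)"
  unfolding psub_comp Fract1_eq0 comp_eq0 by blast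

lemma psub_fin: "finite {t. psub e P t \<noteq> 0}"
proof -
  have "{t. psub e P t \<noteq> 0} \<subseteq> edot e ` Poly_Mapping.keys P" by (auto simp: psub_nz)
  then show ?thesis by (rule finite_subset) simp
qed

lemma psub_series: "is_series (psub e P)"
  using psub_fin by (rule finite_supp_series)

lemma psub_nonzero: "P \<noteq> 0 \<Longrightarrow> psub e P (edot e \<alpha>) \<noteq> 0 \<or> (\<exists>t. psub e P t \<noteq> 0)"
  using psub_nz by (metis keys_eq_empty ex_in_conv)

lemma psub_exists_nz: "P \<noteq> 0 \<Longrightarrow> \<exists>t. psub e P t \<noteq> 0"
  using psub_nz by (metis keys_eq_empty ex_in_conv)

lemma comp_add: "gcomp e (X + Y) t = gcomp e X t + gcomp e Y t"
  by (intro poly_mapping_eqI) (simp add: lookup_comp lookup_add)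

lemma comp_sum: "gcomp e (\<Sum>i\<in>I. X i) t = (\<Sum>i\<in>I. gcomp e (X i) t)"
  by (intro poly_mapping_eqI) (simp add: lookup_comp lookup_sum)

lemma edot_add: "edot e (a + b) = edot e a + edot e b"
  unfolding edot_def by (simp add: lookup_add algebra_simps sum.distrib)

lemma comp_homog_same:
  assumes "\<And>\<alpha>. \<alpha> \<in> Poly_Mapping.keys X \<Longrightarrow> edot e \<alpha> = t"
  shows "gcomp e X t = X"
  using assms by (intro poly_mapping_eqI) (auto simp: lookup_comp in_keys_iff)

lemma comp_homog_other:
  assumes "\<And>\<alpha>. \<alpha> \<in> Poly_Mapping.keys X \<Longrightarrow> edot e \<alpha> \<noteq> t"
  shows "gcomp e X t = 0"
  using assms comp_eq0 by blast

lemma keys_comp: "\<alpha> \<in> Poly_Mapping.keys (gcomp e X s) \<Longrightarrow> edot e \<alpha> = s"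
  by (simp add: in_keys_iff lookup_comp split: if_splits)

lemma comp_decomp:
  assumes "edot e ` Poly_Mapping.keys X \<subseteq> F" "finite F"
  shows "X = (\<Sum>s\<in>F. gcomp e X s)"
proof (rule poly_mapping_eqI)
  fix \<beta>
  have "Poly_Mapping.lookup (\<Sum>s\<in>F. gcomp e X s) \<beta> = (\<Sum>s\<in>F. if edot e \<beta> = s then Poly_Mapping.lookup X \<beta> else 0)"
    by (simp add: lookup_sum lookup_comp)
  also have "\<dots> = (if edot e \<beta> \<in> F then Poly_Mapping.lookup X \<beta> else 0)"
    using assms(2) by (simp add: sum.delta)
  also have "\<dots> = Poly_Mapping.lookup X \<beta>"
    using assms(1) by (auto simp: in_keys_iff image_subset_iff)
  finally show "Poly_Mapping.lookup X \<beta> = Poly_Mapping.lookup (\<Sum>s\<in>F. gcomp e X s) \<beta>" by simp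
qed

lemma comp_mult_homog:
  "gcomp e (gcomp e X s * gcomp e Y s') t = (if s + s' = t then gcomp e X s * gcomp e Y s' else 0)"
proof -
  have "\<alpha> \<in> Poly_Mapping.keys (gcomp e X s * gcomp e Y s') \<Longrightarrow> edot e \<alpha> = s + s'" for \<alpha>
    using keys_mult[of "gcomp e X s" "gcomp e Y s'"] keys_comp[of _ e X s] keys_comp[of _ e Y s']
    by (auto simp: edot_add)
  then show ?thesis by (auto intro: comp_homog_same comp_homog_other)
qed

lemma comp_mult:
  fixes P Q :: "'n::{finite,linorder} mpoly"
  assumes "finite F" "edot e ` Poly_Mapping.keys P \<subseteq> F"
  shows "gcomp e (P * Q) t = (\<Sum>s\<in>F. gcomp e P s * gcomp e Q (t - s))"
proof -
  define G where "G = edot e ` Poly_Mapping.keys Q"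
  have fG: "finite G" unfolding G_def by simp
  have "P * Q = (\<Sum>s\<in>F. gcomp e P s) * (\<Sum>s'\<in>G. gcomp e Q s')"
    using comp_decomp[OF assms(2,1)] comp_decomp[of e Q G] fG unfolding G_def by simp
  also have "\<dots> = (\<Sum>s\<in>F. \<Sum>s'\<in>G. gcomp e P s * gcomp e Q s')"
    by (rule sum_product)
  finally have "gcomp e (P * Q) t = (\<Sum>s\<in>F. \<Sum>s'\<in>G. gcomp e (gcomp e P s * gcomp e Q s') t)"
    by (simp add: comp_sum)
  also have "\<dots> = (\<Sum>s\<in>F. \<Sum>s'\<in>G. if s' = t - s then gcomp e P s * gcomp e Q s' else 0)"
    by (intro sum.cong refl) (auto simp: comp_mult_homog)
  also have "\<dots> = (\<Sum>s\<in>F. if t - s \<in> G then gcomp e P s * gcomp e Q (t - s) else 0)"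
    by (intro sum.cong refl) (simp add: sum.delta[OF fG])
  also have "\<dots> = (\<Sum>s\<in>F. gcomp e P s * gcomp e Q (t - s))"
  proof (intro sum.cong refl)
    fix s assume "s \<in> F"
    show "(if t - s \<in> G then gcomp e P s * gcomp e Q (t - s) else 0) = gcomp e P s * gcomp e Q (t - s)"
    proof (cases "t - s \<in> G")
      case False
      then have "gcomp e Q (t - s) = 0" unfolding G_def comp_eq0 by (metis image_eqI)
      then show ?thesis by simp
    qed simp
  qed
  finally show ?thesis .
qed

lemma psub_mult:
  fixes P Q :: "'n::{finite,linorder} mpoly"
  shows "ser_mult (psub e P) (psub e Q) = psub e (P * Q)"
proof
  fix t
  define F where "F = edot e ` Poly_Mapping.keys P"
  have fF: "finite F" unfolding F_def by simp
  have "ser_mult (psub e P) (psub e Q) t = (\<Sum>s\<in>F. psub e P s * psub e Q (t - s))"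
    by (rule ser_mult_superset[OF fF]) (auto simp: F_def psub_nz)
  also have "\<dots> = Fract (\<Sum>s\<in>F. gcomp e P s * gcomp e Q (t - s)) 1"
    by (simp add: psub_comp Fract1_sum)
  also have "gcomp e (P * Q) t = (\<Sum>s\<in>F. gcomp e P s * gcomp e Q (t - s))"
    by (rule comp_mult[OF fF]) (simp add: F_def)
  then have "Fract (\<Sum>s\<in>F. gcomp e P s * gcomp e Q (t - s)) 1 = psub e (P * Q) t"
    unfolding psub_comp by simp
  finally show "ser_mult (psub e P) (psub e Q) t = psub e (P * Q) t" .
qed



lemma diff_series:
  assumes "is_series a" "is_series b"
  shows "is_series (\<lambda>s. a s - (b s :: 'a::ab_group_add))"
  unfolding is_series_def
proof
  fix B
  have "{t. a t - b t \<noteq> 0 \<and> t \<le> B} \<subseteq> {t. a t \<noteq> 0 \<and> t \<le> B} \<union> {t. b t \<noteq> 0 \<and> t \<le> B}" by auto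
  then show "finite {t. a t - b t \<noteq> 0 \<and> t \<le> B}"
    by (rule finite_subset) (use assms in \<open>auto simp: is_series_def\<close>)
qed

lemma uniq:
  fixes P1 Q1 P2 Q2 :: "'n::{finite,linorder} mpoly"
  assumes g1: "is_series g1" and g2: "is_series g2" and Q1: "Q1 \<noteq> 0" and Q2: "Q2 \<noteq> 0"
    and eq: "Fract P1 Q1 = Fract P2 Q2"
    and h1: "ser_mult g1 (psub e Q1) = psub e P1" and h2: "ser_mult g2 (psub e Q2) = psub e P2"
  shows "g1 = g2"
proof (rule ccontr)
  assume ne: "g1 \<noteq> g2"
  have cross: "P1 * Q2 = P2 * Q1" using eq Q1 Q2 by (simp add: eq_fract)
  define H where "H = ser_mult (psub e Q1) (psub e Q2)"
  have sH: "is_series H" unfolding H_def by (intro ser_mult_series psub_series)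
  obtain s1 where s1: "psub e Q1 s1 \<noteq> 0" using psub_exists_nz[OF Q1] by blast
  obtain s2 where s2: "psub e Q2 s2 \<noteq> 0" using psub_exists_nz[OF Q2] by blast
  have Hnz: "H (val (psub e Q1) + val (psub e Q2)) \<noteq> 0"
    unfolding H_def by (rule ser_mult_nonzero[OF psub_series psub_series s1 s2])
  have e1: "ser_mult g1 H t = psub e (P1 * Q2) t" for t
  proof -
    have "ser_mult g1 H t = ser_mult (ser_mult g1 (psub e Q1)) (psub e Q2) t"
      unfolding H_def by (rule ser_mult_assoc[symmetric, OF g1 psub_series psub_series])
    also have "\<dots> = psub e (P1 * Q2) t" by (simp add: h1 psub_mult)
    finally show ?thesis .
  qed
  have e2: "ser_mult g2 H t = psub e (P2 * Q1) t" for t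
  proof -
    have "H = ser_mult (psub e Q2) (psub e Q1)" unfolding H_def by (rule ser_mult_comm')
    then have "ser_mult g2 H t = ser_mult (ser_mult g2 (psub e Q2)) (psub e Q1) t"
      using ser_mult_assoc[symmetric, OF g2 psub_series psub_series] by simp
    also have "\<dots> = psub e (P2 * Q1) t" by (simp add: h2 psub_mult)
    finally show ?thesis .
  qed
  define D where "D s = g1 s - g2 s" for s
  have sD: "is_series D" unfolding D_def by (rule diff_series[OF g1 g2])
  have D0: "ser_mult D H t = 0" for t
  proof -
    have "ser_mult D H t = ser_mult g1 H t - ser_mult g2 H t"
      unfolding D_def by (rule ser_mult_diff_left[OF fin_rel[OF g1 sH] fin_rel[OF g2 sH]])
    then show ?thesis using e1 e2 cross by simp
  qed
  obtain s0 where "g1 s0 \<noteq> g2 s0" using ne by blast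
  then have "D s0 \<noteq> 0" unfolding D_def by simp
  from ser_mult_nonzero[OF sD sH this Hnz] D0 show False by simp
qed

lemma rsub_prop:
  fixes P Q :: "'n::{finite,linorder} mpoly"
  assumes Q: "Q \<noteq> 0"
  shows "is_series (rsub e (Fract P Q)) \<and> ser_mult (rsub e (Fract P Q)) (psub e Q) = psub e P"
proof -
  obtain s0 where s0: "psub e Q s0 \<noteq> 0" using psub_exists_nz[OF Q] by blast
  obtain h where h: "is_series h" "ser_mult h (psub e Q) = mono0 0 1"
    using inverse_exists[OF psub_fin s0] by blast
  define g where "g = ser_mult (psub e P) h"
  have sg: "is_series g" unfolding g_def by (rule ser_mult_series[OF psub_series h(1)])
  have gQ: "ser_mult g (psub e Q) = psub e P"
  proof
    fix t
    have "ser_mult g (psub e Q) t = ser_mult (psub e P) (ser_mult h (psub e Q)) t"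
      unfolding g_def by (rule ser_mult_assoc[OF psub_series h(1) psub_series])
    then show "ser_mult g (psub e Q) t = psub e P t" by (simp add: h(2) ser_mult_one_right)
  qed
  have "rsub e (Fract P Q) = g"
    unfolding rsub_def
  proof (rule the_equality)
    show "is_series g \<and> (\<exists>P' Q'. Q' \<noteq> 0 \<and> Fract P Q = Fract P' Q' \<and> ser_mult g (psub e Q') = psub e P')"
      using sg gQ Q by blast
  next
    fix g' assume "is_series g' \<and> (\<exists>P' Q'. Q' \<noteq> 0 \<and> Fract P Q = Fract P' Q' \<and> ser_mult g' (psub e Q') = psub e P')"
    then obtain P' Q' where g': "is_series g'" "Q' \<noteq> 0" "Fract P Q = Fract P' Q'" "ser_mult g' (psub e Q') = psub e P'"
      by blast
    show "g' = g" by (rule uniq[OF g'(1) sg g'(2) Q g'(3)[symmetric] g'(4) gQ])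
  qed
  then show ?thesis using sg gQ by simp
qed

lemma rsub_eqI:
  fixes P Q :: "'n::{finite,linorder} mpoly"
  assumes "is_series g" "Q \<noteq> 0" "ser_mult g (psub e Q) = psub e P"
  shows "rsub e (Fract P Q) = g"
  using uniq[OF conjunct1[OF rsub_prop] assms(1) assms(2) assms(2) refl conjunct2[OF rsub_prop] assms(3)] assms(2)
  by blast

lemma edot_scale: "edot (\<lambda>i. c * e i) \<alpha> = c * edot e \<alpha>"
  unfolding edot_def by (simp add: sum_distrib_left mult.assoc)

lemma psub_scale:
  assumes "c \<noteq> 0"
  shows "psub (\<lambda>i. c * e i) P s = psub e P (s / c)"
proof -
  have "{\<alpha> \<in> Poly_Mapping.keys P. edot (\<lambda>i. c * e i) \<alpha> = s} = {\<alpha> \<in> Poly_Mapping.keys P. edot e \<alpha> = s / c}"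
    using assms by (auto simp: edot_scale field_simps)
  then show ?thesis unfolding psub_def by simp
qed

lemma ser_mult_scale:
  fixes a b :: "real \<Rightarrow> 'a::comm_ring_1"
  assumes "c \<noteq> 0"
  shows "ser_mult (\<lambda>s. a (s / c)) (\<lambda>s. b (s / c)) t = ser_mult a b (t / c)"
  unfolding ser_mult_def
proof (rule sum.reindex_bij_witness[of _ "\<lambda>s. c * s" "\<lambda>s. s / c"])
  fix s
  have eq: "(t - s) / c = t / c - s / c" by (simp add: diff_divide_distrib)
  show "c * (s / c) = s" using assms by simp
  show "s / c \<in> {s. a s \<noteq> 0 \<and> b (t / c - s) \<noteq> 0}" if "s \<in> {s. a (s / c) \<noteq> 0 \<and> b ((t - s) / c) \<noteq> 0}"
    using that by (simp add: eq)
  show "a (s / c) * b (t / c - s / c) = a (s / c) * b ((t - s) / c)" unfolding eq ..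
next
  fix s
  have eq: "(t - c * s) / c = t / c - s" using assms by (simp add: diff_divide_distrib)
  show "c * s / c = s" using assms by simp
  show "c * s \<in> {s. a (s / c) \<noteq> 0 \<and> b ((t - s) / c) \<noteq> 0}" if "s \<in> {s. a s \<noteq> 0 \<and> b (t / c - s) \<noteq> 0}"
    using that assms by (simp add: eq)
qed

lemma scale_series:
  assumes "is_series a" "c > 0"
  shows "is_series (\<lambda>s. a (s / c))"
  unfolding is_series_def
proof
  fix B
  have "{s. a (s / c) \<noteq> 0 \<and> s \<le> B} \<subseteq> (\<lambda>x. c * x) ` {x. a x \<noteq> 0 \<and> x \<le> B / c}"
  proof
    fix s assume s: "s \<in> {s. a (s / c) \<noteq> 0 \<and> s \<le> B}"
    have "s / c \<le> B / c" using s assms(2) by (simp add: divide_right_mono)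
    then have "s / c \<in> {x. a x \<noteq> 0 \<and> x \<le> B / c}" using s by simp
    then show "s \<in> (\<lambda>x. c * x) ` {x. a x \<noteq> 0 \<and> x \<le> B / c}"
      by (rule rev_image_eqI) (use assms(2) in simp)
  qed
  then show "finite {s. a (s / c) \<noteq> 0 \<and> s \<le> B}"
    by (rule finite_subset[OF _ finite_imageI]) (use assms(1) in \<open>simp add: is_series_def\<close>)
qed

lemma rsub_scale:
  fixes r :: "'n::{finite,linorder} ratfun"
  assumes c: "c > 0"
  shows "rsub (\<lambda>i. c * u i) r = (\<lambda>s. rsub u r (s / c))"
proof -
  obtain P Q where r: "r = Fract P Q" and Q: "Q \<noteq> 0" by (cases r) auto
  note pr = rsub_prop[OF Q, of u P]
  show ?thesis unfolding r
  proof (rule rsub_eqI[OF scale_series[OF conjunct1[OF pr] c] Q])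
    show "ser_mult (\<lambda>s. rsub u (Fract P Q) (s / c)) (psub (\<lambda>i. c * u i) Q) = psub (\<lambda>i. c * u i) P"
    proof
      fix t
      have "psub (\<lambda>i. c * u i) Q = (\<lambda>s. psub u Q (s / c))" using c by (intro ext psub_scale) simp
      then have "ser_mult (\<lambda>s. rsub u (Fract P Q) (s / c)) (psub (\<lambda>i. c * u i) Q) t
          = ser_mult (rsub u (Fract P Q)) (psub u Q) (t / c)"
        using ser_mult_scale[of c] c by simp
      also have "\<dots> = psub u P (t / c)" using conjunct2[OF pr] by simp
      also have "\<dots> = psub (\<lambda>i. c * u i) P t" using c by (simp add: psub_scale)
      finally show "ser_mult (\<lambda>s. rsub u (Fract P Q) (s / c)) (psub (\<lambda>i. c * u i) Q) t = psub (\<lambda>i. c * u i) P t" .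
    qed
  qed
qed



definition mdeg :: "('n::finite \<Rightarrow>\<^sub>0 nat) \<Rightarrow> real" where
  "mdeg \<alpha> = (\<Sum>i\<in>UNIV. real (Poly_Mapping.lookup \<alpha> i))"

lemma supnorm_ge: "\<bar>e i\<bar> \<le> supnorm e"
  unfolding supnorm_def by (rule Max_ge) auto

lemma supnorm_nonneg: "0 \<le> supnorm e"
  using supnorm_ge[of e undefined] by linarith

lemma supnorm_scale_le:
  assumes "0 \<le> c"
  shows "supnorm (\<lambda>i. c * u i) \<le> c * supnorm u"
  unfolding supnorm_def[of "\<lambda>i. c * u i"]
proof (rule Max.boundedI)
  show "finite (range (\<lambda>i. \<bar>c * u i\<bar>))" by simp
  show "range (\<lambda>i. \<bar>c * u i\<bar>) \<noteq> {}" by simp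
  fix x assume "x \<in> range (\<lambda>i. \<bar>c * u i\<bar>)"
  then obtain i where "x = \<bar>c * u i\<bar>" by auto
  then show "x \<le> c * supnorm u"
    using supnorm_ge[of u i] assms by (simp add: abs_mult mult_left_mono)
qed

lemma abs_edot: "\<bar>edot e \<alpha>\<bar> \<le> supnorm e * mdeg \<alpha>"
proof -
  have "\<bar>edot e \<alpha>\<bar> \<le> (\<Sum>i\<in>UNIV. \<bar>e i * real (Poly_Mapping.lookup \<alpha> i)\<bar>)"
    unfolding edot_def by (rule sum_abs)
  also have "\<dots> \<le> (\<Sum>i\<in>UNIV. supnorm e * real (Poly_Mapping.lookup \<alpha> i))"
    by (intro sum_mono) (simp add: abs_mult mult_right_mono supnorm_ge)
  also have "\<dots> = supnorm e * mdeg \<alpha>" unfolding mdeg_def by (simp add: sum_distrib_left)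
  finally show ?thesis .
qed

lemma mdeg_nonneg: "0 \<le> mdeg \<alpha>"
  unfolding mdeg_def by (intro sum_nonneg) simp

lemma rsub_lower:
  fixes r :: "'n::{finite,linorder} ratfun"
  assumes "r \<noteq> 0"
  shows "\<exists>M\<ge>0. \<forall>e. (\<exists>s. rsub e r s \<noteq> 0) \<and> is_series (rsub e r) \<and> - M * supnorm e \<le> val (rsub e r)"
proof -
  obtain P Q where r: "r = Fract P Q" and Q: "Q \<noteq> 0" by (cases r) auto
  have P: "P \<noteq> 0" using assms r by (auto simp: Zero_fract_def eq_fract Q)
  obtain \<beta>0 where \<beta>0: "\<beta>0 \<in> Poly_Mapping.keys Q" using Q by (metis keys_eq_empty ex_in_conv)
  define M where "M = (\<Sum>\<alpha>\<in>Poly_Mapping.keys P. mdeg \<alpha>) + mdeg \<beta>0"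
  have M0: "0 \<le> M" unfolding M_def by (intro add_nonneg_nonneg sum_nonneg mdeg_nonneg)
  have "(\<exists>s. rsub e r s \<noteq> 0) \<and> is_series (rsub e r) \<and> - M * supnorm e \<le> val (rsub e r)" for e
  proof -
    define g where "g = rsub e r"
    have sg: "is_series g" and gQ: "ser_mult g (psub e Q) = psub e P"
      using rsub_prop[OF Q, of e P] unfolding g_def r by auto
    obtain sp where sp: "psub e P sp \<noteq> 0" using psub_exists_nz[OF P] by blast
    obtain sq where sq: "psub e Q sq \<noteq> 0" using psub_exists_nz[OF Q] by blast
    have gnz: "\<exists>s. g s \<noteq> 0"
    proof (rule ccontr)
      assume "\<not> (\<exists>s. g s \<noteq> 0)"
      then have "ser_mult g (psub e Q) sp = 0" by (simp add: ser_mult_def)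
      then show False using gQ sp by simp
    qed
    then obtain sg0 where sg0: "g sg0 \<noteq> 0" by blast
    have "psub e P (val g + val (psub e Q)) \<noteq> 0"
      using ser_mult_nonzero[OF sg psub_series sg0 sq] gQ by simp
    then have le1: "val (psub e P) \<le> val g + val (psub e Q)"
      using series_val(2)[OF psub_series sp] by blast
    have "psub e P (val (psub e P)) \<noteq> 0" using series_val(1)[OF psub_series sp] .
    then obtain \<alpha> where \<alpha>: "\<alpha> \<in> Poly_Mapping.keys P" "edot e \<alpha> = val (psub e P)" using psub_nz by blast
    have "mdeg \<alpha> \<le> (\<Sum>\<alpha>\<in>Poly_Mapping.keys P. mdeg \<alpha>)"
      by (rule member_le_sum[OF \<alpha>(1)]) (auto simp: mdeg_nonneg)
    then have "supnorm e * mdeg \<alpha> \<le> supnorm e * (\<Sum>\<alpha>\<in>Poly_Mapping.keys P. mdeg \<alpha>)"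
      by (rule mult_left_mono[OF _ supnorm_nonneg])
    moreover have "- (supnorm e * mdeg \<alpha>) \<le> val (psub e P)" using abs_edot[of e \<alpha>] \<alpha>(2) by linarith
    ultimately have l2: "- (supnorm e * (\<Sum>\<alpha>\<in>Poly_Mapping.keys P. mdeg \<alpha>)) \<le> val (psub e P)" by linarith
    have "psub e Q (edot e \<beta>0) \<noteq> 0" using psub_nz \<beta>0 by blast
    then have "val (psub e Q) \<le> edot e \<beta>0" using series_val(2)[OF psub_series sq] by blast
    moreover have "edot e \<beta>0 \<le> supnorm e * mdeg \<beta>0" using abs_edot[of e \<beta>0] by linarith
    ultimately have l3: "val (psub e Q) \<le> supnorm e * mdeg \<beta>0" by linarith
    have "- M * supnorm e \<le> val g" using le1 l2 l3 unfolding M_def by (simp add: algebra_simps)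
    then show ?thesis using gnz sg unfolding g_def by blast
  qed
  then show ?thesis using M0 by blast
qed

lemma deg_bound:
  fixes r :: "'n::{finite,linorder} ratfun"
  assumes "r \<noteq> 0" "rsub e r s \<noteq> 0"
  shows "- deg r * supnorm e \<le> s"
proof -
  obtain M where M: "M \<ge> 0" "\<And>e. (\<exists>s. rsub e r s \<noteq> 0) \<and> is_series (rsub e r) \<and> - M * supnorm e \<le> val (rsub e r)"
    using rsub_lower[OF assms(1)] by blast
  have vs: "val (rsub e r) \<le> s" using series_val(2)[of "rsub e r" s s] M(2)[of e] assms(2) by blast
  show ?thesis
  proof (cases "\<exists>i. e i \<noteq> 0")
    case False
    then have "supnorm e = 0" unfolding supnorm_def by simp
    then show ?thesis using M(2)[of e] vs by simp
  next
    case True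
    then obtain i where "e i \<noteq> 0" by blast
    then have sp: "0 < supnorm e" using supnorm_ge[of e i] by linarith
    have bdd: "bdd_below ((\<lambda>e. deg_eps e r / supnorm e) ` {e. \<exists>i. e i \<noteq> 0})"
    proof (rule bdd_belowI2)
      fix e' :: "'n \<Rightarrow> real" assume "e' \<in> {e. \<exists>i. e i \<noteq> 0}"
      then obtain j where "e' j \<noteq> 0" by blast
      then have sp': "0 < supnorm e'" using supnorm_ge[of e' j] by linarith
      have "- M * supnorm e' \<le> deg_eps e' r" using M(2)[of e'] unfolding deg_eps_def by blast
      then show "- M \<le> deg_eps e' r / supnorm e'" using sp' by (simp add: field_simps)
    qed
    have "(INF e\<in>{e. \<exists>i. e i \<noteq> 0}. deg_eps e r / supnorm e) \<le> deg_eps e r / supnorm e"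
      by (rule cINF_lower[OF bdd]) (use True in blast)
    then have "- deg r \<le> deg_eps e r / supnorm e" unfolding deg_def by simp
    then have "- deg r * supnorm e \<le> deg_eps e r" using sp by (simp add: field_simps)
    then show ?thesis using vs unfolding deg_eps_def by linarith
  qed
qed



theorem proposition2p3:
  fixes f :: "real \<Rightarrow> 'n::{finite,linorder} ratfun"
  assumes "in_R f" and "f \<noteq> (\<lambda>_. 0)"
  shows "\<forall>u :: 'n \<Rightarrow> real. \<exists>\<delta>>0. \<forall>\<epsilon>. 0 < \<epsilon> \<and> \<epsilon> < \<delta> \<longrightarrow>
           lc (rsub u (lc f)) = lc (fsub (\<lambda>i. \<epsilon> * u i) f) \<and>
           val f + \<epsilon> * val (rsub u (lc f)) = val (fsub (\<lambda>i. \<epsilon> * u i) f)"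
proof
  fix u :: "'n \<Rightarrow> real"
  have sf: "is_series f" using assms(1) unfolding in_R_def by blast
  obtain C where hC: "\<And>t. f t \<noteq> 0 \<Longrightarrow> t > val f \<Longrightarrow> deg (f t) \<le> C * (t - val f)"
    using assms(1) unfolding in_R_def by blast
  obtain t1 where t1: "f t1 \<noteq> 0" using assms(2) by auto
  define v where "v = val f"
  define L where "L = lc f"
  have L: "L \<noteq> 0" unfolding L_def lc_def using series_val(1)[OF sf t1] .
  have fv: "\<And>t. f t \<noteq> 0 \<Longrightarrow> v \<le> t" unfolding v_def using series_val(2)[OF sf t1] .
  define C' where "C' = max C 0"
  have C'0: "0 \<le> C'" unfolding C'_def by simp
  have hC': "deg (f t) \<le> C' * (t - v)" if "f t \<noteq> 0" "t > v" for t
  proof -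
    have "deg (f t) \<le> C * (t - v)" using hC that unfolding v_def by blast
    also have "\<dots> \<le> C' * (t - v)" using that(2) unfolding C'_def by (intro mult_right_mono) auto
    finally show ?thesis .
  qed
  define g where "g = rsub u L"
  obtain M where M: "\<And>e. (\<exists>s. rsub e L s \<noteq> 0) \<and> is_series (rsub e L) \<and> - M * supnorm e \<le> val (rsub e L)"
    using rsub_lower[OF L] by blast
  have sg: "is_series g" and "\<exists>s. g s \<noteq> 0" using M[of u] unfolding g_def by auto
  then obtain s1 where s1: "g s1 \<noteq> 0" by blast
  define w where "w = val g"
  define c where "c = g w"
  have c: "c \<noteq> 0" unfolding c_def w_def using series_val(1)[OF sg s1] .
  have gw: "\<And>s. g s \<noteq> 0 \<Longrightarrow> w \<le> s" unfolding w_def using series_val(2)[OF sg s1] .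
  define Y where "Y = {t. f t \<noteq> 0 \<and> t \<le> v + 1 \<and> v < t}"
  have finY: "finite Y"
    by (rule finite_subset[of _ "{t. f t \<noteq> 0 \<and> t \<le> v + 1}"]) (use sf in \<open>auto simp: Y_def is_series_def\<close>)
  define d where "d = (if Y = {} then 1 else Min Y - v)"
  have d0: "0 < d"
  proof (cases "Y = {}")
    case False
    then have "Min Y \<in> Y" using finY by simp
    then show ?thesis using False unfolding d_def Y_def by simp
  qed (simp add: d_def)
  have d1: "d \<le> 1"
  proof (cases "Y = {}")
    case False
    then have "Min Y \<in> Y" using finY by simp
    then show ?thesis using False unfolding d_def Y_def by simp
  qed (simp add: d_def)
  have gap: "v + d \<le> t" if "f t \<noteq> 0" "v < t" for t
  proof (cases "t \<le> v + 1")
    case True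
    then have tY: "t \<in> Y" using that unfolding Y_def by simp
    then have "Y \<noteq> {}" by auto
    then show ?thesis using Min_le[OF finY tY] unfolding d_def by simp
  next
    case False then show ?thesis using d1 by simp
  qed
  define U where "U = supnorm u"
  have U0: "0 \<le> U" unfolding U_def by (rule supnorm_nonneg)
  define \<delta> where "\<delta> = min (1 / (2 * (C' * U + 1))) (d / (2 * (\<bar>w\<bar> + 1)))"
  have CU0: "0 \<le> C' * U" using C'0 U0 by simp
  have \<delta>0: "0 < \<delta>" unfolding \<delta>_def using CU0 d0 by simp
  show "\<exists>\<delta>>0. \<forall>\<epsilon>. 0 < \<epsilon> \<and> \<epsilon> < \<delta> \<longrightarrow>
           lc (rsub u (lc f)) = lc (fsub (\<lambda>i. \<epsilon> * u i) f) \<and>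
           val f + \<epsilon> * val (rsub u (lc f)) = val (fsub (\<lambda>i. \<epsilon> * u i) f)"
  proof (intro exI[of _ \<delta>] conjI allI impI \<delta>0)
    fix \<epsilon> :: real assume \<epsilon>: "0 < \<epsilon> \<and> \<epsilon> < \<delta>"
    then have \<epsilon>0: "0 < \<epsilon>" by simp
    define e where "e = (\<lambda>i. \<epsilon> * u i)"
    have "\<epsilon> < 1 / (2 * (C' * U + 1))" using \<epsilon> unfolding \<delta>_def by simp
    then have "\<epsilon> * (2 * (C' * U + 1)) < 1" using CU0 by (simp add: field_simps)
    then have k1: "C' * \<epsilon> * U \<le> 1 / 2" using \<epsilon>0 by (simp add: algebra_simps)
    have "\<epsilon> < d / (2 * (\<bar>w\<bar> + 1))" using \<epsilon> unfolding \<delta>_def by simp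
    then have "\<epsilon> * (2 * (\<bar>w\<bar> + 1)) < d" by (simp add: field_simps)
    then have "\<epsilon> * \<bar>w\<bar> < d / 2" using \<epsilon>0 by (simp add: algebra_simps)
    moreover have "\<epsilon> * w \<le> \<epsilon> * \<bar>w\<bar>" using \<epsilon>0 by (intro mult_left_mono) auto
    ultimately have k2: "\<epsilon> * w < d / 2" by linarith
    have sne: "supnorm e \<le> \<epsilon> * U" unfolding e_def U_def by (rule supnorm_scale_le) (use \<epsilon>0 in simp)
    have bnd: "- ((t - v) / 2) \<le> s" if "f t \<noteq> 0" "v < t" "rsub e (f t) s \<noteq> 0" for t s
    proof -
      have a: "- deg (f t) * supnorm e \<le> s" by (rule deg_bound[OF that(1) that(3)])
      have "deg (f t) * supnorm e \<le> C' * (t - v) * supnorm e"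
        by (rule mult_right_mono[OF hC'[OF that(1,2)] supnorm_nonneg])
      also have "\<dots> \<le> C' * (t - v) * (\<epsilon> * U)"
        by (rule mult_left_mono[OF sne]) (use C'0 that(2) in simp)
      also have "\<dots> = (C' * \<epsilon> * U) * (t - v)" by (simp add: algebra_simps)
      also have "\<dots> \<le> (1 / 2) * (t - v)" by (rule mult_right_mono[OF k1]) (use that(2) in simp)
      finally show ?thesis using a by linarith
    qed
    have scale: "rsub e L = (\<lambda>s. g (s / \<epsilon>))" unfolding e_def g_def by (rule rsub_scale[OF \<epsilon>0])
    have Lv: "f v = L" unfolding L_def lc_def v_def ..
    have memS: "(t = v \<and> v + \<epsilon> * w \<le> s) \<or> (v < t \<and> v + d / 2 \<le> s)"
      if "f t \<noteq> 0" "rsub e (f t) (s - t) \<noteq> 0" for t s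
    proof (cases "t = v")
      case True
      then have "g ((s - v) / \<epsilon>) \<noteq> 0" using that(2) Lv scale by simp
      then have "w \<le> (s - v) / \<epsilon>" by (rule gw)
      then have "\<epsilon> * w \<le> s - v" using \<epsilon>0 by (simp add: field_simps)
      then show ?thesis using True by simp
    next
      case False
      then have vt: "v < t" using fv[OF that(1)] by simp
      have "- ((t - v) / 2) \<le> s - t" by (rule bnd[OF that(1) vt that(2)])
      moreover have "v + d \<le> t" by (rule gap[OF that(1) vt])
      ultimately have "v + d / 2 \<le> s" by (simp add: field_simps)
      then show ?thesis using vt by simp
    qed
    define F where "F = fsub e f"
    have F_low: "F s = 0" if "s < v + \<epsilon> * w" for s
    proof -
      have S: "{t. f t \<noteq> 0 \<and> rsub e (f t) (s - t) \<noteq> 0} = {}"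
        using memS that k2 by force
      show ?thesis unfolding F_def fsub_def S by simp
    qed
    have F_at: "F (v + \<epsilon> * w) = c"
    proof -
      let ?s = "v + \<epsilon> * w"
      have "{t. f t \<noteq> 0 \<and> rsub e (f t) (?s - t) \<noteq> 0} \<subseteq> {v}"
        using memS k2 by force
      moreover have "v \<in> {t. f t \<noteq> 0 \<and> rsub e (f t) (?s - t) \<noteq> 0}"
        using L Lv scale c \<epsilon>0 unfolding c_def by simp
      ultimately have S: "{t. f t \<noteq> 0 \<and> rsub e (f t) (?s - t) \<noteq> 0} = {v}" by blast
      have "F ?s = rsub e (f v) (?s - v)" unfolding F_def fsub_def S by simp
      also have "\<dots> = c" using Lv scale \<epsilon>0 unfolding c_def by simp
      finally show ?thesis .
    qed
    have vF: "val F = v + \<epsilon> * w"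
    proof (rule val_eqI)
      show "F (v + \<epsilon> * w) \<noteq> 0" using F_at c by simp
      show "v + \<epsilon> * w \<le> s" if "F s \<noteq> 0" for s using F_low that by force
    qed
    have lcF: "lc F = c" unfolding lc_def vF by (rule F_at)
    show "lc (rsub u (lc f)) = lc (fsub (\<lambda>i. \<epsilon> * u i) f)"
      using lcF unfolding F_def e_def lc_def[of "rsub u (lc f)"] c_def w_def g_def L_def by simp
    show "val f + \<epsilon> * val (rsub u (lc f)) = val (fsub (\<lambda>i. \<epsilon> * u i) f)"
      using vF unfolding F_def e_def v_def w_def g_def L_def by simp
  qed
qed

end
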